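(* Fix two distinct decimal digits $d_1 \neq d_2$ in $\{0,1,\dots,9\}$. For integers $i \ge 1$ and $k_1, k_2 \ge 0$, let $S(i,k_1,k_2)$ be the set of positive integers whose base-10 representation has exactly $i$ digits (no leading zeros) and contains exactly $k_1$ occurrences of the digit $d_1$ and exactly $k_2$ occurrences of the digit $d_2$; set $S(i,k_1,k_2)=\emptyset$ if $k_1<0$ or $k_2<0$. For integers $j \ge 1$ define $$t(i,j,k_1,k_2) = \sum_{x \in S(i,k_1,k_2)} \frac{1}{x^j}$$ (an empty sum being $0$). Then for all integers $i\ge 1$, $j \ge 1$, $k_1,k_2 \ge 0$: $$t(i+1,j,k_1,k_2) = \sum_{n=0}^{\infty} (-1)^n \binom{j+n-1}{n} \frac{1}{10^{j+n}} \Big[ d_1^{\,n}\, t(i,j+n,k_1-1,k_2) + d_2^{\,n}\, t(i,j+n,k_1,k_2-1) + \Big(\sum_{\substack{d\in\{0,\dots,9\}\\ d\ne d_1,\, d\ne d_2}} d^{\,n}\Big) t(i,j+n,k_1,k_2) \Big],$$ where $0^0$ is interpreted as $1$, and the series on the right converges.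
   Context: All integers are written in base 10. The three terms in the bracket correspond to the decomposition $S(i+1,k_1,k_2) = \{10x+d_1 : x\in S(i,k_1-1,k_2)\} \cup \{10x+d_2 : x \in S(i,k_1,k_2-1)\} \cup \{10x+d : x\in S(i,k_1,k_2),\ d\in\{0,\dots,9\}\setminus\{d_1,d_2\}\}$. *)

theory Defs
  imports Complex_Main
begin

fun digits10 :: "nat \<Rightarrow> nat list" where
  "digits10 x = (if x < 10 then [x] else (x mod 10) # digits10 (x div 10))"

text \<open>Counts are integers, so
  the set is empty whenever k1 < 0 or k2 < 0.\<close>
definition S :: "nat \<Rightarrow> nat \<Rightarrow> nat \<Rightarrow> int \<Rightarrow> int \<Rightarrow> nat set" where
  "S d1 d2 i k1 k2 = {x. 0 < x \<and> length (digits10 x) = i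
      \<and> int (count_list (digits10 x) d1) = k1 \<and> int (count_list (digits10 x) d2) = k2}"

definition t :: "nat \<Rightarrow> nat \<Rightarrow> nat \<Rightarrow> nat \<Rightarrow> int \<Rightarrow> int \<Rightarrow> real" where
  "t d1 d2 i j k1 k2 = (\<Sum>x\<in>S d1 d2 i k1 k2. 1 / (real x) ^ j)"

end

theory Submission imports Defs "HOL-Analysis.Analysis" begin


declare digits10.simps[simp del]

lemma serA:
  fixes x d j :: nat
  assumes "x > 0" "d \<le> 9" "j \<ge> 1"
  shows "(\<lambda>n. (-1) ^ n * real ((j + n - 1) choose n) / 10 ^ (j + n) * (real d ^ n * (1 / real x ^ (j + n))))
          sums (1 / real (10 * x + d) ^ j)"
proof -
  define z where "z = real d / (10 * real x)"
  have z0: "z \<ge> 0" using assms by (simp add: z_def)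
  have "z < 1" using assms by (simp add: z_def field_simps)
  hence "\<bar>z\<bar> < 1" using z0 by simp
  from gen_binomial_real[OF this, of "- real j"]
  have 1: "(\<lambda>n. (- real j gchoose n) * z ^ n) sums (1 + z) powr (- real j)" .
  have g: "(- real j gchoose n) = (-1)^n * real ((j + n - 1) choose n)" for n
    using assms(3) by (simp add: gbinomial_minus binomial_gbinomial of_nat_diff)
  have p: "(1 + z) powr (- real j) = 1 / (1 + z) ^ j"
    using z0 by (simp add: powr_minus powr_realpow divide_inverse)
  from 1 have "(\<lambda>n. (-1)^n * real ((j + n - 1) choose n) * z ^ n * (1 / (10 * real x) ^ j)) sums (1 / (1 + z) ^ j * (1 / (10 * real x) ^ j))"
    unfolding g p by (rule sums_mult2)
  moreover have "1 / (1 + z) ^ j * (1 / (10 * real x) ^ j) = 1 / real (10 * x + d) ^ j"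
  proof -
    have e: "(1 + z) * (10 * real x) = real (10 * x + d)" using assms by (simp add: z_def field_simps)
    have "1 / (1 + z) ^ j * (1 / (10 * real x) ^ j) = 1 / ((1 + z) * (10 * real x)) ^ j"
      by (simp add: power_mult_distrib)
    then show ?thesis using e by simp
  qed
  moreover have "(-1)^n * real ((j + n - 1) choose n) * z ^ n * (1 / (10 * real x) ^ j)
     = (-1) ^ n * real ((j + n - 1) choose n) / 10 ^ (j + n) * (real d ^ n * (1 / real x ^ (j + n)))" for n
  proof -
    have "z ^ n = real d ^ n / (10 ^ n * real x ^ n)" by (simp add: z_def power_divide power_mult_distrib)
    moreover have "(10 * real x) ^ j = 10 ^ j * real x ^ j" by (simp add: power_mult_distrib)
    ultimately show ?thesis using assms by (simp add: power_add)
  qed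
  ultimately show ?thesis by simp
qed
lemma dig_bound: "x < 10 ^ length (digits10 x)"
proof (induction x rule: digits10.induct)
  case (1 x)
  show ?case
  proof (cases "x < 10")
    case True then show ?thesis by (subst digits10.simps) simp
  next
    case False
    then have "x div 10 < 10 ^ length (digits10 (x div 10))" using 1 by simp
    then have "x < 10 * 10 ^ length (digits10 (x div 10))" by linarith
    then show ?thesis using False by (subst digits10.simps) simp
  qed
qed

lemma finite_S: "finite (S d1 d2 i k1 k2)"
proof -
  have "S d1 d2 i k1 k2 \<subseteq> {..<10^i}" unfolding S_def using dig_bound by auto
  then show ?thesis using finite_subset by blast
qed

lemma dig_step: "x > 0 \<Longrightarrow> d < 10 \<Longrightarrow> digits10 (10 * x + d) = d # digits10 x"
  by (subst digits10.simps) simp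

lemma dig_small: "length (digits10 y) = 1 \<longleftrightarrow> y < 10"
proof -
  have "length (digits10 (y div 10)) \<ge> 1" by (subst digits10.simps) simp
  then show ?thesis by (subst digits10.simps) auto
qed

lemma S_decomp:
  assumes "i \<ge> 1"
  shows "S d1 d2 (i+1) k1 k2 = (\<lambda>(d,x). 10*x+d) ` (SIGMA d:{0..9}. S d1 d2 i (k1 - of_bool(d=d1)) (k2 - of_bool(d=d2)))"
proof
  show "S d1 d2 (i+1) k1 k2 \<subseteq> (\<lambda>(d,x). 10*x+d) ` (SIGMA d:{0..9}. S d1 d2 i (k1 - of_bool(d=d1)) (k2 - of_bool(d=d2)))"
  proof
    fix y assume y: "y \<in> S d1 d2 (i+1) k1 k2"
    then have len: "length (digits10 y) = i + 1" and y0: "y > 0" by (auto simp: S_def)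
    have "y \<ge> 10" using len dig_small[of y] assms by auto
    then have x0: "y div 10 > 0" by simp
    have yeq: "y = 10 * (y div 10) + y mod 10" by simp
    have dy: "digits10 y = y mod 10 # digits10 (y div 10)"
      using dig_step[OF x0, of "y mod 10"] yeq by simp
    have "y div 10 \<in> S d1 d2 i (k1 - of_bool(y mod 10=d1)) (k2 - of_bool(y mod 10=d2))"
      using y x0 by (auto simp: S_def dy)
    moreover have "y mod 10 \<in> {0..9}" by simp
    ultimately show "y \<in> (\<lambda>(d,x). 10*x+d) ` (SIGMA d:{0..9}. S d1 d2 i (k1 - of_bool(d=d1)) (k2 - of_bool(d=d2)))"
      using yeq by (intro image_eqI[of _ _ "(y mod 10, y div 10)"]) auto
  qed
next
  show "(\<lambda>(d,x). 10*x+d) ` (SIGMA d:{0..9}. S d1 d2 i (k1 - of_bool(d=d1)) (k2 - of_bool(d=d2))) \<subseteq> S d1 d2 (i+1) k1 k2"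
  proof clarify
    fix d x assume d: "d \<in> {0..(9::nat)}" and x: "x \<in> S d1 d2 i (k1 - of_bool(d=d1)) (k2 - of_bool(d=d2))"
    then have x0: "x > 0" by (simp add: S_def)
    have dd: "digits10 (10 * x + d) = d # digits10 x" using dig_step[OF x0, of d] d by simp
    show "10 * x + d \<in> S d1 d2 (i+1) k1 k2" using x x0 by (auto simp: S_def dd)
  qed
qed

lemma inj_dx: "inj_on (\<lambda>(d,x). 10*x+d) (SIGMA d:{0..(9::nat)}. B d)"
proof (rule inj_onI, clarify)
  fix d x d' x' :: nat
  assume "d \<in> {0..9}" "d' \<in> {0..9}" "10 * x + d = 10 * x' + d'"
  then show "d = d' \<and> x = x'" by presburger
qed

lemma t_decomp:
  assumes "i \<ge> 1"
  shows "t d1 d2 (i+1) j k1 k2 = (\<Sum>d\<in>{0..9}. \<Sum>x\<in>S d1 d2 i (k1 - of_bool(d=d1)) (k2 - of_bool(d=d2)). 1 / real (10*x+d) ^ j)"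
proof -
  have "t d1 d2 (i+1) j k1 k2 = (\<Sum>y\<in>(\<lambda>(d,x). 10*x+d) ` (SIGMA d:{0..9}. S d1 d2 i (k1 - of_bool(d=d1)) (k2 - of_bool(d=d2))). 1 / real y ^ j)"
    unfolding t_def S_decomp[OF assms] ..
  also have "\<dots> = (\<Sum>(d,x)\<in>(SIGMA d:{0..9}. S d1 d2 i (k1 - of_bool(d=d1)) (k2 - of_bool(d=d2))). 1 / real (10*x+d) ^ j)"
    by (subst sum.reindex[OF inj_dx]) (simp add: case_prod_unfold)
  also have "\<dots> = (\<Sum>d\<in>{0..9}. \<Sum>x\<in>S d1 d2 i (k1 - of_bool(d=d1)) (k2 - of_bool(d=d2)). 1 / real (10*x+d) ^ j)"
    by (rule sum.Sigma[symmetric]) (auto simp: finite_S)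
  finally show ?thesis .
qed

theorem mainTheorem1:
  fixes d1 d2 i j :: nat and k1 k2 :: int
  assumes "d1 \<le> 9" "d2 \<le> 9" "d1 \<noteq> d2"
    and "i \<ge> 1" "j \<ge> 1" "k1 \<ge> 0" "k2 \<ge> 0"
  shows "(\<lambda>n. (-1) ^ n * real ((j + n - 1) choose n) / 10 ^ (j + n) *
            (real d1 ^ n * t d1 d2 i (j + n) (k1 - 1) k2
             + real d2 ^ n * t d1 d2 i (j + n) k1 (k2 - 1)
             + (\<Sum>d\<in>{0..9::nat} - {d1, d2}. real d ^ n) * t d1 d2 i (j + n) k1 k2))
         sums t d1 d2 (i + 1) j k1 k2"
proof -
  define c where "c n = (-1) ^ n * real ((j + n - 1) choose n) / 10 ^ (j + n)" for n
  define B where "B d = S d1 d2 i (k1 - of_bool(d=d1)) (k2 - of_bool(d=d2))" for d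
  define T where "T d n = t d1 d2 i (j + n) (k1 - of_bool(d=d1)) (k2 - of_bool(d=d2))" for d n
  have "(\<lambda>n. \<Sum>d\<in>{0..9::nat}. \<Sum>x\<in>B d. c n * (real d ^ n * (1 / real x ^ (j + n))))
        sums (\<Sum>d\<in>{0..9::nat}. \<Sum>x\<in>B d. 1 / real (10*x+d) ^ j)"
  proof (intro sums_sum)
    fix d x assume d: "d \<in> {0..9::nat}" and x: "x \<in> B d"
    then have "x > 0" by (simp add: B_def S_def)
    then show "(\<lambda>n. c n * (real d ^ n * (1 / real x ^ (j + n)))) sums (1 / real (10*x+d) ^ j)"
      unfolding c_def using serA[of x d j] d assms(5) by simp
  qed
  also have "(\<Sum>d\<in>{0..9::nat}. \<Sum>x\<in>B d. 1 / real (10*x+d) ^ j) = t d1 d2 (i + 1) j k1 k2"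
    unfolding B_def using t_decomp[OF assms(4)] by simp
  finally have 1: "(\<lambda>n. \<Sum>d\<in>{0..9::nat}. \<Sum>x\<in>B d. c n * (real d ^ n * (1 / real x ^ (j + n))))
        sums t d1 d2 (i + 1) j k1 k2" .
  have split: "(\<Sum>d\<in>{0..9::nat}. g d) = g d1 + g d2 + (\<Sum>d\<in>{0..9} - {d1, d2}. g d)" for g :: "nat \<Rightarrow> real"
  proof -
    have "{0..9::nat} = insert d1 (insert d2 ({0..9} - {d1, d2}))" using assms(1,2) by auto
    then have "(\<Sum>d\<in>{0..9::nat}. g d) = (\<Sum>d\<in>insert d1 (insert d2 ({0..9} - {d1, d2})). g d)" by simp
    also have "\<dots> = g d1 + g d2 + (\<Sum>d\<in>{0..9} - {d1, d2}. g d)" using assms(3) by simp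
    finally show ?thesis .
  qed
  have e: "(\<Sum>d\<in>{0..9::nat}. \<Sum>x\<in>B d. c n * (real d ^ n * (1 / real x ^ (j + n))))
     = c n * (real d1 ^ n * t d1 d2 i (j + n) (k1 - 1) k2
             + real d2 ^ n * t d1 d2 i (j + n) k1 (k2 - 1)
             + (\<Sum>d\<in>{0..9::nat} - {d1, d2}. real d ^ n) * t d1 d2 i (j + n) k1 k2)" for n
  proof -
    have "(\<Sum>d\<in>{0..9::nat}. \<Sum>x\<in>B d. c n * (real d ^ n * (1 / real x ^ (j + n))))
        = (\<Sum>d\<in>{0..9::nat}. c n * (real d ^ n * T d n))"
      unfolding T_def t_def B_def by (simp add: sum_distrib_left)
    also have "\<dots> = c n * (real d1 ^ n * T d1 n) + c n * (real d2 ^ n * T d2 n) + (\<Sum>d\<in>{0..9} - {d1, d2}. c n * (real d ^ n * T d n))"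
      by (rule split)
    also have "(\<Sum>d\<in>{0..9} - {d1, d2}. c n * (real d ^ n * T d n)) = (\<Sum>d\<in>{0..9::nat} - {d1, d2}. c n * (real d ^ n * t d1 d2 i (j + n) k1 k2))"
      by (rule sum.cong) (auto simp: T_def)
    also have "\<dots> = c n * (\<Sum>d\<in>{0..9::nat} - {d1, d2}. real d ^ n) * t d1 d2 i (j + n) k1 k2"
      by (simp add: sum_distrib_left sum_distrib_right mult.assoc)
    also have "T d1 n = t d1 d2 i (j + n) (k1 - 1) k2" using assms(3) by (simp add: T_def)
    also have "T d2 n = t d1 d2 i (j + n) k1 (k2 - 1)" using assms(3) by (simp add: T_def)
    finally show ?thesis by (simp add: algebra_simps)
  qed
  have 2: "(\<lambda>n. c n * (real d1 ^ n * t d1 d2 i (j + n) (k1 - 1) k2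
             + real d2 ^ n * t d1 d2 i (j + n) k1 (k2 - 1)
             + (\<Sum>d\<in>{0..9::nat} - {d1, d2}. real d ^ n) * t d1 d2 i (j + n) k1 k2)) sums t d1 d2 (i + 1) j k1 k2"
    using 1 by (simp only: e)
  then show ?thesis by (simp only: c_def)
qed

end
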